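(* Let $G$ be a $k$-uniform $s$-cycle with $k\ge 3$ and $1\le s<\frac{k}{2}$. Then $\lambda(\mathcal{Q})=2+2\alpha_*^{k-2s}$, where $\alpha_*$ is the unique root in $(0,1)$ of $2\alpha^k+\alpha^{2s}-1=0$. When $k$ is even, also $\lambda(\mathcal{L})=2+2\alpha_*^{k-2s}$.
   Context: A $k$-uniform $s$-cycle with $m$ edges has vertex set $\mathbb{Z}_n$, $n=m(k-s)$ (vertex $n+i$ identified with $i$), and edges $e_j=\{j(k-s)+1,\ldots,j(k-s)+k\}$, $j=0,\ldots,m-1$; it is assumed that $n\ge 2k-s$. The degree $d_i$ of a vertex is the number of edges containing it. For a real tensor $\mathcal{T}$ of order $k$ and dimension $n$, $\lambda\in\mathbb{R}$ is an H-eigenvalue if there is nonzero $\mathbf{x}\in\mathbb{R}^n$ with $(\mathcal{T}\mathbf{x}^{k-1})_i=\lambda x_i^{k-1}$ for all $i$, where $(\mathcal{T}\mathbf{x}^{k-1})_i=\sum_{i_2,\ldots,i_k}t_{ii_2\ldots i_k}x_{i_2}\cdots x_{i_k}$; $\lambda(\mathcal{T})$ is the largest H-eigenvalue. The adjacency tensor $\mathcal{A}$ has entries $1/(k-1)!$ at $(i_1,\ldots,i_k)$ with $\{i_1,\ldots,i_k\}$ an edge and $0$ otherwise; $\mathcal{D}$ is diagonal with entries $d_i$; $\mathcal{L}=\mathcal{D}-\mathcal{A}$ (Laplacian tensor), $\mathcal{Q}=\mathcal{D}+\mathcal{A}$ (signless Laplacian tensor). Equivalently the H-eigen-equations read $\lambda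 x_i^{k-1}=d_ix_i^{k-1}\mp\sum_{e\ni i}\prod_{j\in e\setminus\{i\}}x_j$ (minus for $\mathcal{L}$, plus for $\mathcal{Q}$). *)

theory Defs
  imports Main "HOL-Library.Multiset" Complex_Main
begin

text \<open>Tensors of order k and dimension n: index tuples are lists of length k with
  entries in {0..<n}; a tensor is a function from such lists to reals.
  Vectors in R^n are functions nat => real, only their values on {0..<n} matter.\<close>

definition index_tuples :: "nat \<Rightarrow> nat \<Rightarrow> nat list set" where
  "index_tuples l n = {js. length js = l \<and> set js \<subseteq> {..<n}}"

definition tensor_apply :: "(nat list \<Rightarrow> real) \<Rightarrow> nat \<Rightarrow> nat \<Rightarrow> (nat \<Rightarrow> real) \<Rightarrow> nat \<Rightarrow> real" where
  "tensor_apply T k n x i = (\<Sum>js\<in>index_tuples (k - 1) n. T (i # js) * prod_list (map x js))"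

definition H_eigenvalue :: "(nat list \<Rightarrow> real) \<Rightarrow> nat \<Rightarrow> nat \<Rightarrow> real \<Rightarrow> bool" where
  "H_eigenvalue T k n lam \<longleftrightarrow>
     (\<exists>x::nat \<Rightarrow> real. (\<exists>i<n. x i \<noteq> 0) \<and>
        (\<forall>i<n. tensor_apply T k n x i = lam * x i ^ (k - 1)))"

definition largest_H_eigenvalue :: "(nat list \<Rightarrow> real) \<Rightarrow> nat \<Rightarrow> nat \<Rightarrow> real \<Rightarrow> bool" where
  "largest_H_eigenvalue T k n lam \<longleftrightarrow>
     H_eigenvalue T k n lam \<and> (\<forall>mu. H_eigenvalue T k n mu \<longrightarrow> mu \<le> lam)"

definition scycle_n :: "nat \<Rightarrow> nat \<Rightarrow> nat \<Rightarrow> nat" where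
  "scycle_n k s m = m * (k - s)"

definition scycle_edge :: "nat \<Rightarrow> nat \<Rightarrow> nat \<Rightarrow> nat \<Rightarrow> nat set" where
  "scycle_edge k s m j = {(j * (k - s) + t) mod scycle_n k s m | t. 1 \<le> t \<and> t \<le> k}"

definition scycle_edges :: "nat \<Rightarrow> nat \<Rightarrow> nat \<Rightarrow> nat set set" where
  "scycle_edges k s m = scycle_edge k s m ` {..<m}"

definition scycle_degree :: "nat \<Rightarrow> nat \<Rightarrow> nat \<Rightarrow> nat \<Rightarrow> nat" where
  "scycle_degree k s m i = card {e \<in> scycle_edges k s m. i \<in> e}"

definition adjacency_tensor :: "nat \<Rightarrow> nat set set \<Rightarrow> nat list \<Rightarrow> real" where
  "adjacency_tensor k E js =
     (if length js = k \<and> set js \<in> E then 1 / fact (k - 1) else 0)"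

definition degree_tensor :: "nat \<Rightarrow> (nat \<Rightarrow> nat) \<Rightarrow> nat list \<Rightarrow> real" where
  "degree_tensor k d js =
     (if length js = k \<and> (\<forall>j\<in>set js. j = hd js) then real (d (hd js)) else 0)"

definition laplacian_tensor :: "nat \<Rightarrow> nat \<Rightarrow> nat \<Rightarrow> nat list \<Rightarrow> real" where
  "laplacian_tensor k s m js =
     degree_tensor k (scycle_degree k s m) js - adjacency_tensor k (scycle_edges k s m) js"

definition signless_laplacian_tensor :: "nat \<Rightarrow> nat \<Rightarrow> nat \<Rightarrow> nat list \<Rightarrow> real" where
  "signless_laplacian_tensor k s m js =
     degree_tensor k (scycle_degree k s m) js + adjacency_tensor k (scycle_edges k s m) js"

end

theory Submission
  imports Defs "HOL-Combinatorics.Multiset_Permutations"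
begin

lemma finite_index_tuples: "finite (index_tuples l n)"
proof -
  have "index_tuples l n = {xs. set xs \<subseteq> {..<n} \<and> length xs = l}"
    unfolding index_tuples_def by auto
  then show ?thesis using finite_lists_length_eq[of "{..<n}" l] by simp
qed

lemma tensor_apply_add:
  "tensor_apply (\<lambda>js. f js + g js) k n x i = tensor_apply f k n x i + tensor_apply g k n x i"
  unfolding tensor_apply_def by (simp add: sum.distrib distrib_right)

lemma tensor_apply_diff:
  "tensor_apply (\<lambda>js. f js - g js) k n x i = tensor_apply f k n x i - tensor_apply g k n x i"
  unfolding tensor_apply_def by (simp add: sum_subtractf left_diff_distrib)

lemma tensor_apply_degree:
  assumes "k \<ge> 1" "i < n"
  shows "tensor_apply (degree_tensor k d) k n x i = real (d i) * x i ^ (k - 1)"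
proof -
  let ?r = "replicate (k - 1) i"
  have eq: "\<And>js. js \<in> index_tuples (k - 1) n \<Longrightarrow>
     degree_tensor k d (i # js) * prod_list (map x js) =
     (if js = ?r then real (d i) * x i ^ (k - 1) else 0)"
  proof -
    fix js assume js: "js \<in> index_tuples (k - 1) n"
    then have len: "length js = k - 1" unfolding index_tuples_def by auto
    have "(\<forall>j\<in>set (i # js). j = hd (i # js)) \<longleftrightarrow> js = ?r"
    proof
      assume "\<forall>j\<in>set (i # js). j = hd (i # js)"
      then show "js = ?r" using len replicate_length_same[of js i] by simp
    next
      assume "js = ?r" then show "\<forall>j\<in>set (i # js). j = hd (i # js)" by simp
    qed
    then show "degree_tensor k d (i # js) * prod_list (map x js) =
     (if js = ?r then real (d i) * x i ^ (k - 1) else 0)"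
      using len assms by (auto simp: degree_tensor_def prod_list_replicate)
  qed
  have "?r \<in> index_tuples (k - 1) n" using assms unfolding index_tuples_def by auto
  then show ?thesis unfolding tensor_apply_def
    by (simp add: sum.cong[OF refl eq] sum.delta finite_index_tuples)
qed

lemma tensor_apply_adjacency:
  assumes fin: "finite E" and cardE: "\<And>e. e \<in> E \<Longrightarrow> card e = k \<and> e \<subseteq> {..<n}"
    and k: "k \<ge> 1" and i: "i < n"
  shows "tensor_apply (adjacency_tensor k E) k n x i =
     (\<Sum>e\<in>{e\<in>E. i \<in> e}. \<Prod>u\<in>e - {i}. x u)"
proof -
  let ?S = "{js\<in>index_tuples (k - 1) n. set (i # js) \<in> E}"
  let ?P = "\<lambda>e. permutations_of_set (e - {i})"
  let ?c = "1 / fact (k - 1) :: real"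
  have "tensor_apply (adjacency_tensor k E) k n x i =
      (\<Sum>js\<in>index_tuples (k - 1) n. if set (i # js) \<in> E then ?c * prod_list (map x js) else 0)"
    unfolding tensor_apply_def
    by (rule sum.cong) (use k in \<open>auto simp: adjacency_tensor_def index_tuples_def\<close>)
  also have "\<dots> = (\<Sum>js\<in>?S. ?c * prod_list (map x js))"
    by (rule sum.inter_filter[symmetric]) (simp add: finite_index_tuples)
  also have "?S = (\<Union>(?P ` {e\<in>E. i \<in> e}))"
  proof (intro set_eqI iffI)
    fix js assume "js \<in> ?S"
    then have len: "length js = k - 1" and e: "set (i # js) \<in> E"
      unfolding index_tuples_def by auto
    have "card (set (i # js)) = length (i # js)" using cardE[OF e] len k by simp
    then have d: "distinct (i # js)" by (rule card_distinct)
    show "js \<in> (\<Union>(?P ` {e\<in>E. i \<in> e}))"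
      using d e by (auto simp: permutations_of_set_def intro!: bexI[of _ "set (i # js)"])
  next
    fix js assume "js \<in> (\<Union>(?P ` {e\<in>E. i \<in> e}))"
    then obtain e where e: "e \<in> E" "i \<in> e" and js: "set js = e - {i}" "distinct js"
      by (auto simp: permutations_of_set_def)
    have fe: "finite e" using cardE[OF e(1)] k by (metis card.infinite not_one_le_zero)
    have "length js = k - 1" using distinct_card[OF js(2)] js(1) cardE[OF e(1)] e fe by simp
    moreover have "set (i # js) = e" using js e by auto
    ultimately show "js \<in> ?S" using cardE[OF e(1)] e i unfolding index_tuples_def by auto
  qed
  also have "(\<Sum>js\<in>\<Union>(?P ` {e\<in>E. i \<in> e}). ?c * prod_list (map x js)) =
     (\<Sum>e\<in>{e\<in>E. i \<in> e}. \<Sum>js\<in>?P e. ?c * prod_list (map x js))"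
  proof (rule sum.UNION_disjoint)
    show "finite {e\<in>E. i \<in> e}" using fin by simp
    show "\<forall>e\<in>{e\<in>E. i \<in> e}. finite (?P e)" by simp
    show "\<forall>e\<in>{e\<in>E. i \<in> e}. \<forall>e'\<in>{e\<in>E. i \<in> e}. e \<noteq> e' \<longrightarrow> ?P e \<inter> ?P e' = {}"
    proof (intro ballI impI)
      fix e e' assume e: "e \<in> {e\<in>E. i \<in> e}" and e': "e' \<in> {e\<in>E. i \<in> e}" and ne: "e \<noteq> e'"
      show "?P e \<inter> ?P e' = {}"
      proof (rule ccontr)
        assume "?P e \<inter> ?P e' \<noteq> {}"
        then obtain js where "set js = e - {i}" "set js = e' - {i}"
          unfolding permutations_of_set_def by blast
        then have "insert i (e - {i}) = insert i (e' - {i})" by simp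
        then show False using e e' ne by (simp add: insert_absorb)
      qed
    qed
  qed
  also have "\<dots> = (\<Sum>e\<in>{e\<in>E. i \<in> e}. \<Prod>u\<in>e - {i}. x u)"
  proof (rule sum.cong[OF refl])
    fix e assume e: "e \<in> {e\<in>E. i \<in> e}"
    have fe: "finite e" using cardE e k by (metis (mono_tags) card.infinite mem_Collect_eq not_one_le_zero)
    have ce: "card (e - {i}) = k - 1" using cardE e fe by auto
    have "(\<Sum>js\<in>?P e. ?c * prod_list (map x js)) = (\<Sum>js\<in>?P e. ?c * (\<Prod>u\<in>e - {i}. x u))"
    proof (rule sum.cong[OF refl])
      fix js assume "js \<in> ?P e"
      then have js: "set js = e - {i}" "distinct js" by (auto simp: permutations_of_set_def)
      show "?c * prod_list (map x js) = ?c * (\<Prod>u\<in>e - {i}. x u)"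
        using prod.distinct_set_conv_list[OF js(2), of x] js(1) by simp
    qed
    also have "\<dots> = (\<Prod>u\<in>e - {i}. x u)" using fe ce by simp
    finally show "(\<Sum>js\<in>?P e. ?c * prod_list (map x js)) = (\<Prod>u\<in>e - {i}. x u)" .
  qed
  finally show ?thesis .
qed

lemma prod_list_abs_le:
  assumes "\<And>j. j \<in> set js \<Longrightarrow> \<bar>x j\<bar> \<le> (y j :: real)"
  shows "\<bar>prod_list (map x js)\<bar> \<le> prod_list (map y js)"
  using assms
proof (induction js)
  case Nil then show ?case by simp
next
  case (Cons a js)
  have ya: "0 \<le> y a" using Cons.prems[of a] by (meson abs_ge_zero order_trans list.set_intros(1))
  have "\<bar>prod_list (map x (a # js))\<bar> = \<bar>x a\<bar> * \<bar>prod_list (map x js)\<bar>" by (simp add: abs_mult)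
  also have "\<dots> \<le> y a * prod_list (map y js)"
    by (rule mult_mono) (use Cons ya in auto)
  finally show ?case by simp
qed

lemma prod_list_scale: "prod_list (map (\<lambda>j. t * y j) js) = (t::real) ^ length js * prod_list (map y js)"
  by (induction js) auto

lemma upper_bound:
  fixes T Q :: "nat list \<Rightarrow> real"
  assumes TQ: "\<And>js. \<bar>T js\<bar> \<le> Q js"
    and ypos: "\<And>i. i < n \<Longrightarrow> y i > 0"
    and yeig: "\<And>i. i < n \<Longrightarrow> tensor_apply Q k n y i = lam * y i ^ (k - 1)"
    and H: "H_eigenvalue T k n mu"
  shows "mu \<le> lam"
proof -
  obtain x where xnz: "\<exists>i<n. x i \<noteq> 0" and xeig: "\<And>i. i < n \<Longrightarrow> tensor_apply T k n x i = mu * x i ^ (k - 1)"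
    using H unfolding H_eigenvalue_def by blast
  define f where "f i = \<bar>x i\<bar> / y i" for i
  have ne: "{..<n} \<noteq> {}" using xnz by auto
  define t where "t = Max (f ` {..<n})"
  have "t \<in> f ` {..<n}" unfolding t_def by (rule Max_in) (use ne in auto)
  then obtain i0 where i0: "i0 < n" "f i0 = t" by auto
  have tge: "\<And>j. j < n \<Longrightarrow> f j \<le> t" unfolding t_def by (rule Max_ge) auto
  obtain i1 where i1: "i1 < n" "x i1 \<noteq> 0" using xnz by auto
  have "0 < f i1" using i1 ypos[OF i1(1)] unfolding f_def by auto
  then have tpos: "t > 0" using tge[OF i1(1)] by linarith
  have xle: "\<bar>x j\<bar> \<le> t * y j" if j: "j < n" for j
    using tge[OF j] ypos[OF j] unfolding f_def by (simp add: pos_divide_le_eq)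
  have xi0: "\<bar>x i0\<bar> = t * y i0" using i0 ypos[OF i0(1)] unfolding f_def by (simp add: field_simps)
  have "\<bar>mu\<bar> * \<bar>x i0\<bar> ^ (k - 1) = \<bar>tensor_apply T k n x i0\<bar>"
    using xeig[OF i0(1)] by (simp add: abs_mult power_abs)
  also have "\<dots> \<le> (\<Sum>js\<in>index_tuples (k - 1) n. \<bar>T (i0 # js) * prod_list (map x js)\<bar>)"
    unfolding tensor_apply_def by (rule sum_abs)
  also have "\<dots> \<le> (\<Sum>js\<in>index_tuples (k - 1) n. Q (i0 # js) * (t ^ (k - 1) * prod_list (map y js)))"
  proof (rule sum_mono)
    fix js assume js: "js \<in> index_tuples (k - 1) n"
    have "\<bar>prod_list (map x js)\<bar> \<le> prod_list (map (\<lambda>j. t * y j) js)"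
      by (rule prod_list_abs_le) (use js xle in \<open>auto simp: index_tuples_def\<close>)
    also have "\<dots> = t ^ (k - 1) * prod_list (map y js)"
      using js by (simp add: prod_list_scale index_tuples_def)
    finally have "\<bar>prod_list (map x js)\<bar> \<le> t ^ (k - 1) * prod_list (map y js)" .
    then show "\<bar>T (i0 # js) * prod_list (map x js)\<bar> \<le> Q (i0 # js) * (t ^ (k - 1) * prod_list (map y js))"
      unfolding abs_mult by (intro mult_mono) (use TQ[of "i0 # js"] in \<open>auto intro: order_trans[OF abs_ge_zero]\<close>)
  qed
  also have "\<dots> = t ^ (k - 1) * tensor_apply Q k n y i0"
    unfolding tensor_apply_def sum_distrib_left by (rule sum.cong) (simp_all add: mult_ac)
  also have "\<dots> = t ^ (k - 1) * (lam * y i0 ^ (k - 1))"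
    using yeig[OF i0(1)] by simp
  also have "\<dots> = lam * (t * y i0) ^ (k - 1)"
    by (simp add: power_mult_distrib)
  also have "\<dots> = lam * \<bar>x i0\<bar> ^ (k - 1)"
    using xi0 by simp
  finally have "\<bar>mu\<bar> * \<bar>x i0\<bar> ^ (k - 1) \<le> lam * \<bar>x i0\<bar> ^ (k - 1)" .
  moreover have "\<bar>x i0\<bar> ^ (k - 1) > 0" using xi0 tpos ypos[OF i0(1)] by simp
  ultimately have "\<bar>mu\<bar> \<le> lam" by simp
  then show ?thesis by simp
qed

lemma mod_lt2: "(x::nat) < 2 * m \<Longrightarrow> x mod m = (if x < m then x else x - m)"
  by (simp add: le_mod_geq)

locale cyc =
  fixes k s m p n :: nat
  assumes k3: "k \<ge> 3" and s1: "1 \<le> s" and sk: "2 * s < k"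
    and nge: "scycle_n k s m \<ge> 2 * k - s"
    and p_def: "p = k - s" and n_def: "n = scycle_n k s m"
begin

lemma kp: "k = p + s" using p_def sk by simp
lemma sp: "s < p" using p_def sk by simp
lemma nmp: "n = m * p" using n_def p_def unfolding scycle_n_def by simp
lemma m3: "m \<ge> 3"
proof (rule ccontr)
  assume "\<not> m \<ge> 3"
  then have "m \<le> 2" by simp
  then have "m * p \<le> 2 * p" by (rule mult_right_mono) simp
  moreover have "m * p \<ge> 2 * p + s" using nge n_def nmp kp by simp
  ultimately show False using s1 by linarith
qed
lemma kn: "k < n"
proof -
  have "3 * p \<le> m * p" using m3 by (rule mult_right_mono) simp
  then show ?thesis using nmp kp sp by linarith
qed
lemma ppos: "p > 0" using sp by simp

lemma edge_img: "scycle_edge k s m j = (\<lambda>t. (j * p + t) mod n) ` {1..k}"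
  unfolding scycle_edge_def p_def n_def by auto

lemma offset: assumes "j < m" "t < n" shows "((j * p + t) mod n + n - j * p) mod n = t"
proof -
  have jp: "j * p \<le> n" using assms(1) nmp by simp
  have "((j * p + t) mod n + n - j * p) mod n = ((j * p + t) mod n + (n - j * p)) mod n"
    using jp by simp
  also have "\<dots> = (j * p + t + (n - j * p)) mod n" by (simp add: mod_add_left_eq)
  also have "j * p + t + (n - j * p) = t + n" using jp by simp
  finally show ?thesis using assms(2) by simp
qed

lemma mem_edge1: assumes "i < n" "j < m"
  shows "i \<in> scycle_edge k s m j \<longleftrightarrow> 1 \<le> (i + n - j * p) mod n \<and> (i + n - j * p) mod n \<le> k"
proof
  assume "i \<in> scycle_edge k s m j"
  then obtain t where t: "1 \<le> t" "t \<le> k" "i = (j * p + t) mod n" unfolding edge_img by auto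
  have jp: "j * p \<le> n" using assms(2) nmp by simp
  have "(i + n - j * p) mod n = t" using offset[OF assms(2), of t] t kn jp by simp
  then show "1 \<le> (i + n - j * p) mod n \<and> (i + n - j * p) mod n \<le> k" using t by simp
next
  assume h: "1 \<le> (i + n - j * p) mod n \<and> (i + n - j * p) mod n \<le> k"
  have jp: "j * p \<le> n" using assms(2) nmp by simp
  have "(j * p + (i + n - j * p) mod n) mod n = (j * p + (i + n - j * p)) mod n" by (simp add: mod_add_right_eq)
  also have "j * p + (i + n - j * p) = i + n" using jp by simp
  finally have "(j * p + (i + n - j * p) mod n) mod n = i" using assms(1) by simp
  then show "i \<in> scycle_edge k s m j" unfolding edge_img using h by force
qed

lemma offset_formula: assumes "i < n" "j < m"
  shows "(i + n - j * p) mod n = ((i div p + m - j) mod m) * p + i mod p"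
proof -
  let ?X = "i div p + (m - j)"
  have a: "(m - j) * p = m * p - j * p" by (simp add: diff_mult_distrib)
  have b: "j * p \<le> m * p" using assms(2) by simp
  have c: "i = i div p * p + i mod p" by simp
  have "i + n - j * p = i + (m * p - j * p)" using b nmp by simp
  also have "\<dots> = i + (m - j) * p" using a by simp
  also have "\<dots> = (i div p * p + i mod p) + (m - j) * p" using c by simp
  also have "\<dots> = ?X * p + i mod p" by (simp add: add_mult_distrib)
  finally have eq: "i + n - j * p = ?X * p + i mod p" .
  have d: "(?X * p + i mod p) div p = ?X" using ppos by simp
  have mo: "(?X * p + i mod p) mod p = i mod p" by simp
  have "(i + n - j * p) mod n = (?X * p + i mod p) mod (p * m)" using eq nmp by (simp add: mult.commute)
  also have "\<dots> = p * ((?X * p + i mod p) div p mod m) + (?X * p + i mod p) mod p"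
    by (rule mod_mult2_eq)
  also have "\<dots> = (?X mod m) * p + i mod p" using d mo by simp
  finally show ?thesis using assms(2) by simp
qed

lemma mem_edge: assumes "i < n" "j < m"
  shows "i \<in> scycle_edge k s m j \<longleftrightarrow>
    (j = i div p \<and> 1 \<le> i mod p) \<or> (j = (i div p + m - 1) mod m \<and> i mod p \<le> s)"
proof -
  let ?q = "i div p" and ?r = "i mod p"
  have q: "?q < m" using assms(1) nmp ppos by (simp add: div_less_iff_less_mult mult.commute)
  have r: "?r < p" using ppos by simp
  let ?c = "(?q + m - j) mod m"
  have c_iff: "1 \<le> ?c * p + ?r \<and> ?c * p + ?r \<le> k \<longleftrightarrow> (?c = 0 \<and> 1 \<le> ?r) \<or> (?c = 1 \<and> ?r \<le> s)"
  proof (cases "?c \<ge> 2")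
    case True
    then have "?c * p \<ge> 2 * p" by (rule mult_right_mono) simp
    then have "\<not> (?c * p + ?r \<le> k)" using kp sp by linarith
    then show ?thesis using True by auto
  next
    case False
    then have "?c = 0 \<or> ?c = 1" by auto
    moreover have "?r \<le> p + s" using r by simp
    ultimately show ?thesis using kp ppos by auto
  qed
  have mlt: "?q + m - j < 2 * m" using q assms(2) by simp
  have c0: "?c = 0 \<longleftrightarrow> j = ?q"
    using mod_lt2[OF mlt] q assms(2) by auto
  have q1: "(?q + m - 1) mod m = (if ?q = 0 then m - 1 else ?q - 1)"
    using mod_lt2[of "?q + m - 1" m] q m3 by auto
  have c1: "?c = 1 \<longleftrightarrow> j = (?q + m - 1) mod m"
    using mod_lt2[OF mlt] q assms(2) q1 m3 by auto
  show ?thesis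
    unfolding mem_edge1[OF assms] offset_formula[OF assms] c_iff c0 c1 by simp
qed

end

definition Yv :: "nat \<Rightarrow> nat \<Rightarrow> real \<Rightarrow> nat \<Rightarrow> real" where
  "Yv p s a u = (if 1 \<le> u mod p \<and> u mod p \<le> s then 1 else a)"
definition Zv :: "nat \<Rightarrow> nat \<Rightarrow> real \<Rightarrow> nat \<Rightarrow> real" where
  "Zv p s a u = (if u mod p = 0 then -1 else 1) * Yv p s a u"

context cyc begin

lemma qlt: "i < n \<Longrightarrow> i div p < m"
  using nmp ppos by (simp add: div_less_iff_less_mult mult.commute)

lemma qprev: "q < m \<Longrightarrow> (q + m - 1) mod m = (if q = 0 then m - 1 else q - 1)"
  using mod_lt2[of "q + m - 1" m] m3 by auto

lemma edge_inj: "inj_on (scycle_edge k s m) {..<m}"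
proof (rule inj_onI)
  fix j j' assume j: "j \<in> {..<m}" and j': "j' \<in> {..<m}" and eq: "scycle_edge k s m j = scycle_edge k s m j'"
  let ?v = "((j + 1) mod m) * p"
  have jm: "(j + 1) mod m < m" using m3 by simp
  then have "(j + 1) mod m \<le> m - 1" by simp
  then have "?v \<le> (m - 1) * p" by (rule mult_right_mono) simp
  also have "\<dots> < m * p" using m3 ppos by simp
  finally have vn: "?v < n" using nmp by simp
  have vd: "?v div p = (j + 1) mod m" using ppos by simp
  have vm: "?v mod p = 0" by simp
  have w: "((j + 1) mod m + m - 1) mod m = j"
  proof (cases "j + 1 < m")
    case True
    then have "(j + 1) mod m = j + 1" by simp
    then show ?thesis using True by simp
  next
    case False
    then have "j + 1 = m" using j by simp
    then show ?thesis by simp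
  qed
  have "?v \<in> scycle_edge k s m j" using mem_edge[OF vn, of j] j vd vm w by simp
  then have "?v \<in> scycle_edge k s m j'" using eq by simp
  then show "j = j'" using mem_edge[OF vn, of j'] j' vd vm w by simp
qed

lemma edge_card: assumes "j < m" shows "card (scycle_edge k s m j) = k"
proof -
  have "inj_on (\<lambda>t. (j * p + t) mod n) {1..k}"
  proof (rule inj_onI)
    fix t t' assume t: "t \<in> {1..k}" and t': "t' \<in> {1..k}" and e: "(j * p + t) mod n = (j * p + t') mod n"
    have "t = ((j * p + t) mod n + n - j * p) mod n" using offset[OF assms, of t] t kn by simp
    also have "\<dots> = ((j * p + t') mod n + n - j * p) mod n" using e by simp
    also have "\<dots> = t'" using offset[OF assms, of t'] t' kn by simp
    finally show "t = t'" .
  qed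
  then show ?thesis unfolding edge_img by (simp add: card_image)
qed

lemma edge_sub: "scycle_edge k s m j \<subseteq> {..<n}"
  unfolding edge_img using kn by auto

lemma edges_fin: "finite (scycle_edges k s m)"
  unfolding scycle_edges_def by simp

lemma edges_props: "e \<in> scycle_edges k s m \<Longrightarrow> card e = k \<and> e \<subseteq> {..<n}"
  unfolding scycle_edges_def using edge_card edge_sub by auto

lemma degree: assumes i: "i < n"
  shows "scycle_degree k s m i = (if 1 \<le> i mod p \<and> i mod p \<le> s then 2 else 1)"
proof -
  let ?q = "i div p" and ?r = "i mod p"
  let ?q' = "(?q + m - 1) mod m"
  let ?J = "{j. j < m \<and> i \<in> scycle_edge k s m j}"
  have im: "{e \<in> scycle_edges k s m. i \<in> e} = scycle_edge k s m ` ?J"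
    unfolding scycle_edges_def by auto
  have "inj_on (scycle_edge k s m) ?J" by (rule inj_on_subset[OF edge_inj]) auto
  then have "scycle_degree k s m i = card ?J"
    unfolding scycle_degree_def im by (rule card_image)
  also have J: "?J = {j. j < m \<and> ((j = ?q \<and> 1 \<le> ?r) \<or> (j = ?q' \<and> ?r \<le> s))}"
    using mem_edge[OF i] by auto
  finally have d: "scycle_degree k s m i = card {j. j < m \<and> ((j = ?q \<and> 1 \<le> ?r) \<or> (j = ?q' \<and> ?r \<le> s))}" .
  have q: "?q < m" using qlt[OF i] .
  have q': "?q' < m" using m3 by simp
  have ne: "?q \<noteq> ?q'" using qprev[OF q] q m3 by auto
  show ?thesis
  proof (cases "1 \<le> ?r \<and> ?r \<le> s")
    case True
    then have "{j. j < m \<and> ((j = ?q \<and> 1 \<le> ?r) \<or> (j = ?q' \<and> ?r \<le> s))} = {?q, ?q'}"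
      using q q' by auto
    then show ?thesis using d ne True by simp
  next
    case False
    show ?thesis
    proof (cases "1 \<le> ?r")
      case True
      then have "{j. j < m \<and> ((j = ?q \<and> 1 \<le> ?r) \<or> (j = ?q' \<and> ?r \<le> s))} = {?q}"
        using q False by auto
      then show ?thesis using d False by simp
    next
      case F2: False
      then have "{j. j < m \<and> ((j = ?q \<and> 1 \<le> ?r) \<or> (j = ?q' \<and> ?r \<le> s))} = {?q'}"
        using q' by auto
      then show ?thesis using d False by simp
    qed
  qed
qed

lemma prod_edge: assumes "j < m"
  shows "(\<Prod>u\<in>scycle_edge k s m j. g (u mod p)) = (\<Prod>t\<in>{1..k}. (g (t mod p) :: real))"
proof -
  have inj: "inj_on (\<lambda>t. (j * p + t) mod n) {1..k}"
  proof (rule inj_onI)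
    fix t t' assume t: "t \<in> {1..k}" and t': "t' \<in> {1..k}" and e: "(j * p + t) mod n = (j * p + t') mod n"
    have "t = ((j * p + t) mod n + n - j * p) mod n" using offset[OF assms, of t] t kn by simp
    also have "\<dots> = ((j * p + t') mod n + n - j * p) mod n" using e by simp
    also have "\<dots> = t'" using offset[OF assms, of t'] t' kn by simp
    finally show "t = t'" .
  qed
  have dv: "p dvd n" using nmp by simp
  have "(\<Prod>u\<in>scycle_edge k s m j. g (u mod p)) = (\<Prod>t\<in>{1..k}. g ((j * p + t) mod n mod p))"
    unfolding edge_img by (subst prod.reindex[OF inj]) (simp add: comp_def)
  also have "\<dots> = (\<Prod>t\<in>{1..k}. g (t mod p))"
    using mod_mod_cancel[OF dv] by simp
  finally show ?thesis .
qed

lemma tmod: "t \<le> k \<Longrightarrow> t mod p = (if t < p then t else if t = p then 0 else t - p)"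
  using mod_lt2[of t p] kp sp by auto

lemma S1: "{1..k} \<inter> - {t. 1 \<le> t mod p \<and> t mod p \<le> s} = {s+1..p}"
proof (intro set_eqI iffI)
  fix t assume "t \<in> {1..k} \<inter> - {t. 1 \<le> t mod p \<and> t mod p \<le> s}"
  then show "t \<in> {s+1..p}" using tmod[of t] kp sp by (auto split: if_splits)
next
  fix t assume "t \<in> {s+1..p}"
  then show "t \<in> {1..k} \<inter> - {t. 1 \<le> t mod p \<and> t mod p \<le> s}" using tmod[of t] kp sp by (auto split: if_splits)
qed

lemma S2: "{1..k} \<inter> {t. t mod p = 0} = {p}"
proof (intro set_eqI iffI)
  fix t assume "t \<in> {1..k} \<inter> {t. t mod p = 0}"
  then show "t \<in> {p}" using tmod[of t] kp sp by (auto split: if_splits)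
next
  fix t assume "t \<in> {p}"
  then show "t \<in> {1..k} \<inter> {t. t mod p = 0}" using kp ppos by auto
qed

lemma prodY: "(\<Prod>t\<in>{1..k}. (if 1 \<le> t mod p \<and> t mod p \<le> s then 1 else a)) = (a::real) ^ (p - s)"
proof -
  have "(\<Prod>t\<in>{1..k}. (if 1 \<le> t mod p \<and> t mod p \<le> s then 1 else a)) =
     (\<Prod>t\<in>{1..k} \<inter> {t. 1 \<le> t mod p \<and> t mod p \<le> s}. 1) * (\<Prod>t\<in>{1..k} \<inter> - {t. 1 \<le> t mod p \<and> t mod p \<le> s}. a)"
    by (rule prod.If_cases) simp
  also have "\<dots> = a ^ (p - s)" unfolding S1 by simp
  finally show ?thesis .
qed

lemma prodS: "(\<Prod>t\<in>{1..k}. (if t mod p = 0 then -1 else 1)) = (-1::real)"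
proof -
  have "(\<Prod>t\<in>{1..k}. (if t mod p = 0 then -1 else 1)) =
     (\<Prod>t\<in>{1..k} \<inter> {t. t mod p = 0}. (-1::real)) * (\<Prod>t\<in>{1..k} \<inter> - {t. t mod p = 0}. 1)"
    by (rule prod.If_cases) simp
  also have "\<dots> = -1" unfolding S2 by simp
  finally show ?thesis .
qed

lemma prod_Y: "j < m \<Longrightarrow> (\<Prod>u\<in>scycle_edge k s m j. Yv p s a u) = a ^ (p - s)"
  unfolding Yv_def using prod_edge[of j "\<lambda>r. if 1 \<le> r \<and> r \<le> s then 1 else a"] prodY by simp

lemma prod_Z: "j < m \<Longrightarrow> (\<Prod>u\<in>scycle_edge k s m j. Zv p s a u) = - (a ^ (p - s))"
proof -
  assume j: "j < m"
  have "(\<Prod>u\<in>scycle_edge k s m j. Zv p s a u) =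
     (\<Prod>u\<in>scycle_edge k s m j. (if u mod p = 0 then -1 else 1)) * (\<Prod>u\<in>scycle_edge k s m j. Yv p s a u)"
    unfolding Zv_def by (rule prod.distrib)
  also have "(\<Prod>u\<in>scycle_edge k s m j. (if u mod p = 0 then -1 else 1)) = (-1::real)"
    using prod_edge[OF j, of "\<lambda>r. if r = 0 then -1 else 1"] prodS by simp
  finally show ?thesis using prod_Y[OF j] by simp
qed

end

lemma alg_root:
  fixes a :: real and b s :: nat
  assumes a: "a > 0" and h: "2 * a ^ (b + 1 + 2 * s) + a ^ (2 * s) - 1 = 0"
  shows "a ^ (b + 2 * s) + a ^ (b + 1) / a = (2 + 2 * a ^ (b + 1)) * a ^ (b + 2 * s)"
proof -
  define X where "X = a ^ b"
  define Y where "Y = a ^ (2 * s)"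
  have e1: "a ^ (b + 1 + 2 * s) = X * a * Y" unfolding X_def Y_def by (simp add: power_add)
  have e2: "a ^ (b + 2 * s) = X * Y" unfolding X_def Y_def by (simp add: power_add)
  have e3: "a ^ (b + 1) = X * a" unfolding X_def by simp
  have h': "2 * (X * a * Y) + Y - 1 = 0" using h by (simp only: e1 Y_def[symmetric])
  have "X * Y + X * a / a - (2 + 2 * (X * a)) * (X * Y) = - X * (2 * (X * a * Y) + Y - 1)"
    using a by (simp add: field_simps)
  then have "X * Y + X * a / a = (2 + 2 * (X * a)) * (X * Y)" using h' by simp
  then show ?thesis using e2 e3 a X_def by simp
qed

context cyc begin

lemma adj_apply:
  assumes i: "i < n" and wi: "w i \<noteq> 0" and P: "\<And>j. j < m \<Longrightarrow> prod w (scycle_edge k s m j) = P"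
  shows "tensor_apply (adjacency_tensor k (scycle_edges k s m)) k n w i = real (scycle_degree k s m i) * (P / w i)"
proof -
  have "tensor_apply (adjacency_tensor k (scycle_edges k s m)) k n w i =
     (\<Sum>e\<in>{e\<in>scycle_edges k s m. i \<in> e}. \<Prod>u\<in>e - {i}. w u)"
    by (rule tensor_apply_adjacency[OF edges_fin edges_props]) (use k3 i in auto)
  also have "\<dots> = (\<Sum>e\<in>{e\<in>scycle_edges k s m. i \<in> e}. P / w i)"
  proof (rule sum.cong[OF refl])
    fix e assume e: "e \<in> {e\<in>scycle_edges k s m. i \<in> e}"
    then obtain j where j: "j < m" "e = scycle_edge k s m j" unfolding scycle_edges_def by auto
    have "finite e" using edges_props[of e] e k3 by (metis (mono_tags) card.infinite mem_Collect_eq not_numeral_le_zero)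
    then have "prod w e = w i * prod w (e - {i})" using e by (simp add: prod.remove)
    then have "w i * prod w (e - {i}) = P" using P[OF j(1)] j(2) by simp
    then show "prod w (e - {i}) = P / w i" using wi by (simp add: field_simps)
  qed
  also have "\<dots> = real (scycle_degree k s m i) * (P / w i)"
    unfolding scycle_degree_def by simp
  finally show ?thesis .
qed

lemma Q_apply:
  assumes i: "i < n" and wi: "w i \<noteq> 0" and P: "\<And>j. j < m \<Longrightarrow> prod w (scycle_edge k s m j) = P"
  shows "tensor_apply (signless_laplacian_tensor k s m) k n w i =
    real (scycle_degree k s m i) * w i ^ (k - 1) + real (scycle_degree k s m i) * (P / w i)"
proof -
  have eq: "signless_laplacian_tensor k s m = (\<lambda>js. degree_tensor k (scycle_degree k s m) js + adjacency_tensor k (scycle_edges k s m) js)"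
    by (rule ext) (simp add: signless_laplacian_tensor_def)
  show ?thesis unfolding eq tensor_apply_add
    using tensor_apply_degree[of k i n "scycle_degree k s m" w] adj_apply[OF assms] k3 i by simp
qed

lemma L_apply:
  assumes i: "i < n" and wi: "w i \<noteq> 0" and P: "\<And>j. j < m \<Longrightarrow> prod w (scycle_edge k s m j) = P"
  shows "tensor_apply (laplacian_tensor k s m) k n w i =
    real (scycle_degree k s m i) * w i ^ (k - 1) - real (scycle_degree k s m i) * (P / w i)"
proof -
  have eq: "laplacian_tensor k s m = (\<lambda>js. degree_tensor k (scycle_degree k s m) js - adjacency_tensor k (scycle_edges k s m) js)"
    by (rule ext) (simp add: laplacian_tensor_def)
  show ?thesis unfolding eq tensor_apply_diff
    using tensor_apply_degree[of k i n "scycle_degree k s m" w] adj_apply[OF assms] k3 i by simp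
qed

end

lemma degree_tensor_nonneg: "degree_tensor k d js \<ge> 0"
  unfolding degree_tensor_def by simp
lemma adjacency_tensor_nonneg: "adjacency_tensor k E js \<ge> 0"
  unfolding adjacency_tensor_def by simp

theorem theorem5p1:
  fixes k s m :: nat
  assumes "k \<ge> 3" and "1 \<le> s" and "2 * s < k"
    and "scycle_n k s m \<ge> 2 * k - s"
  shows "(\<exists>!a::real. 0 < a \<and> a < 1 \<and> 2 * a ^ k + a ^ (2 * s) - 1 = 0) \<and>
    (\<forall>a::real. 0 < a \<and> a < 1 \<and> 2 * a ^ k + a ^ (2 * s) - 1 = 0 \<longrightarrow>
       largest_H_eigenvalue (signless_laplacian_tensor k s m) k (scycle_n k s m)
         (2 + 2 * a ^ (k - 2 * s)) \<and>
       (even k \<longrightarrow> largest_H_eigenvalue (laplacian_tensor k s m) k (scycle_n k s m)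
         (2 + 2 * a ^ (k - 2 * s))))"
proof (intro conjI allI impI)
  define f where "f a = 2 * a ^ k + a ^ (2 * s) - (1::real)" for a
  have mono: "f x < f y" if "0 < x" "x < y" for x y
  proof -
    have "x ^ k < y ^ k" using that assms(1) by (intro power_strict_mono) auto
    moreover have "x ^ (2 * s) < y ^ (2 * s)" using that assms(2) by (intro power_strict_mono) auto
    ultimately show ?thesis unfolding f_def by simp
  qed
  have f0: "f 0 = -1" unfolding f_def using assms(1,2) by (simp add: power_0_left)
  have f1: "f 1 = 2" unfolding f_def by simp
  have "continuous_on {0..1} f" unfolding f_def by (intro continuous_intros)
  then obtain x where x: "0 \<le> x" "x \<le> 1" "f x = 0" using IVT'[of f 0 0 1] f0 f1 by auto
  have x0: "x \<noteq> 0" using x f0 by auto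
  have x1: "x \<noteq> 1" using x f1 by auto
  show "\<exists>!a::real. 0 < a \<and> a < 1 \<and> 2 * a ^ k + a ^ (2 * s) - 1 = 0"
  proof (rule ex1I[of _ x])
    show "0 < x \<and> x < 1 \<and> 2 * x ^ k + x ^ (2 * s) - 1 = 0" using x x0 x1 unfolding f_def by auto
  next
    fix y :: real assume y: "0 < y \<and> y < 1 \<and> 2 * y ^ k + y ^ (2 * s) - 1 = 0"
    then have fy: "f y = 0" unfolding f_def by simp
    show "y = x"
    proof (rule ccontr)
      assume "y \<noteq> x"
      then have "y < x \<or> x < y" by auto
      then show False using mono[of y x] mono[of x y] fy x x0 y by auto
    qed
  qed
next
  fix a :: real
  assume a: "0 < a \<and> a < 1 \<and> 2 * a ^ k + a ^ (2 * s) - 1 = 0"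
  define p where "p = k - s"
  define n where "n = scycle_n k s m"
  interpret cyc k s m p n
    by unfold_locales (use assms p_def n_def in auto)
  define lam where "lam = 2 + 2 * a ^ (k - 2 * s)"
  define b where "b = p - s - 1"
  have kb: "k = b + 1 + 2 * s" using kp sp b_def by simp
  have k1: "k - 1 = b + 2 * s" using kb by simp
  have ps: "p - s = b + 1" using sp b_def by simp
  have k2: "k - 2 * s = b + 1" using kb by simp
  have apos: "a > 0" using a by simp
  have root: "2 * a ^ (b + 1 + 2 * s) + a ^ (2 * s) - 1 = 0" using a kb by simp
  have key: "a ^ (k - 1) + a ^ (p - s) / a = lam * a ^ (k - 1)"
    using alg_root[OF apos root] unfolding lam_def k1 ps k2 by simp
  have n0: "0 < n" using kn by simp
  have Ypos: "Yv p s a i > 0" for i using apos unfolding Yv_def by simp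
  have Yeig: "tensor_apply (signless_laplacian_tensor k s m) k n (Yv p s a) i = lam * Yv p s a i ^ (k - 1)"
    if i: "i < n" for i
  proof -
    have "tensor_apply (signless_laplacian_tensor k s m) k n (Yv p s a) i =
      real (scycle_degree k s m i) * Yv p s a i ^ (k - 1) + real (scycle_degree k s m i) * (a ^ (p - s) / Yv p s a i)"
    proof (rule Q_apply[OF i])
      show "Yv p s a i \<noteq> 0" using Ypos[of i] by simp
    next
      fix j assume "j < m" then show "prod (Yv p s a) (scycle_edge k s m j) = a ^ (p - s)" by (rule prod_Y)
    qed
    also have "\<dots> = lam * Yv p s a i ^ (k - 1)"
    proof (cases "1 \<le> i mod p \<and> i mod p \<le> s")
      case True
      then have "Yv p s a i = 1" "scycle_degree k s m i = 2" using degree[OF i] unfolding Yv_def by auto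
      then show ?thesis unfolding lam_def k2 ps by simp
    next
      case False
      then have "Yv p s a i = a" "scycle_degree k s m i = 1" using degree[OF i] unfolding Yv_def by auto
      then show ?thesis using key by simp
    qed
    finally show ?thesis .
  qed
  have Qnn: "\<bar>signless_laplacian_tensor k s m js\<bar> \<le> signless_laplacian_tensor k s m js" for js
    unfolding signless_laplacian_tensor_def using degree_tensor_nonneg adjacency_tensor_nonneg
    by (simp add: add_nonneg_nonneg)
  have HQ: "H_eigenvalue (signless_laplacian_tensor k s m) k n lam"
    unfolding H_eigenvalue_def
  proof (rule exI[of _ "Yv p s a"], intro conjI)
    show "\<exists>i<n. Yv p s a i \<noteq> 0" using n0 Ypos[of 0] by (intro exI[of _ 0]) auto
    show "\<forall>i<n. tensor_apply (signless_laplacian_tensor k s m) k n (Yv p s a) i = lam * Yv p s a i ^ (k - 1)"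
      using Yeig by blast
  qed
  have upQ: "\<And>T mu. (\<And>js. \<bar>T js\<bar> \<le> signless_laplacian_tensor k s m js) \<Longrightarrow> H_eigenvalue T k n mu \<Longrightarrow> mu \<le> lam"
    by (rule upper_bound[of _ "signless_laplacian_tensor k s m" n "Yv p s a" k lam]) (use Ypos Yeig in auto)
  show "largest_H_eigenvalue (signless_laplacian_tensor k s m) k (scycle_n k s m) (2 + 2 * a ^ (k - 2 * s))"
    unfolding largest_H_eigenvalue_def n_def[symmetric] lam_def[symmetric]
    using HQ upQ[OF Qnn] by blast
  {
    assume ev: "even k"
    have odd1: "odd (k - 1)" using ev kb by simp
    have Znz: "Zv p s a i \<noteq> 0" for i using apos unfolding Zv_def Yv_def by simp
    have Zeig: "tensor_apply (laplacian_tensor k s m) k n (Zv p s a) i = lam * Zv p s a i ^ (k - 1)"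
      if i: "i < n" for i
    proof -
      have "tensor_apply (laplacian_tensor k s m) k n (Zv p s a) i =
        real (scycle_degree k s m i) * Zv p s a i ^ (k - 1) - real (scycle_degree k s m i) * (- (a ^ (p - s)) / Zv p s a i)"
      proof (rule L_apply[OF i])
        show "Zv p s a i \<noteq> 0" by (rule Znz)
      next
        fix j assume "j < m" then show "prod (Zv p s a) (scycle_edge k s m j) = - (a ^ (p - s))" by (rule prod_Z)
      qed
      also have "\<dots> = lam * Zv p s a i ^ (k - 1)"
      proof (cases "i mod p = 0")
        case True
        then have "scycle_degree k s m i = 1" using degree[OF i] by simp
        moreover have "Zv p s a i = - a" using True unfolding Zv_def Yv_def by simp
        ultimately show ?thesis using key odd1 apos by (simp add: field_simps)
      next
        case F1: False
        show ?thesis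
        proof (cases "1 \<le> i mod p \<and> i mod p \<le> s")
          case True
          then have "Zv p s a i = 1" "scycle_degree k s m i = 2" using degree[OF i] F1 unfolding Zv_def Yv_def by auto
          then show ?thesis unfolding lam_def k2 ps by simp
        next
          case False
          then have "Zv p s a i = a" "scycle_degree k s m i = 1" using degree[OF i] F1 unfolding Zv_def Yv_def by auto
          then show ?thesis using key by simp
        qed
      qed
      finally show ?thesis .
    qed
    have Lnn: "\<bar>laplacian_tensor k s m js\<bar> \<le> signless_laplacian_tensor k s m js" for js
      unfolding laplacian_tensor_def signless_laplacian_tensor_def
      using degree_tensor_nonneg[of k "scycle_degree k s m" js] adjacency_tensor_nonneg[of k "scycle_edges k s m" js]
      by linarith
    have HL: "H_eigenvalue (laplacian_tensor k s m) k n lam"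
      unfolding H_eigenvalue_def
    proof (rule exI[of _ "Zv p s a"], intro conjI)
      show "\<exists>i<n. Zv p s a i \<noteq> 0" using n0 Znz[of 0] by (intro exI[of _ 0]) auto
      show "\<forall>i<n. tensor_apply (laplacian_tensor k s m) k n (Zv p s a) i = lam * Zv p s a i ^ (k - 1)"
        using Zeig by blast
    qed
    show "largest_H_eigenvalue (laplacian_tensor k s m) k (scycle_n k s m) (2 + 2 * a ^ (k - 2 * s))"
      unfolding largest_H_eigenvalue_def n_def[symmetric] lam_def[symmetric]
      using HL upQ[OF Lnn] by blast
  }
qed

end
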